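(* Let $n_1,n_2$ be coprime positive integers with $n_2<n_1$ and $n_1>1$, and let $r_0$ be a real number with $0\le r_0<1$. Define $a_0,\dots,a_L$, $n_1,\dots,n_{L+2}$, $b_0,b_1,\dots$, $r_0,r_1,\dots$ and $d_i$ as in the context. Let $k$ be a positive integer with $k<L$, and assume $a_i=b_i$ for all $0\le i\le k$. Then: (i) if $k<L-1$ and $|d_k|<\frac{1}{n_{k+1}(n_{k+1}-1)}$, then $a_{k+1}=b_{k+1}$; (ii) if $k=L-1$ and $|d_{L-1}|<\frac{1}{n_L(n_L+1)}$, then $a_L=b_L$ or $a_L-1=b_L$.
   Context: Expansion of $n_2/n_1$ (Euclidean algorithm): set $a_0=0$ and, for $i=1,2,\dots$, $a_i=\lfloor n_i/n_{i+1}\rfloor$ and $n_{i+2}=n_i-a_in_{i+1}$, stopping at the index $L$ with $n_{L+2}=0$; then $n_{L+1}=1$ (by coprimality), $n_L=a_L\ge 2$, and $n_2/n_1=[0,a_1,\dots,a_L]$, i.e. $\frac{n_i}{n_{i+1}}=a_i+\frac{n_{i+2}}{n_{i+1}}$ for $1\le i\le L$. Expansion of $r_0$: set $b_0=\lfloor r_0\rfloor=0$ and, for $i\ge1$, as long as $r_{i-1}\neq0$, $b_i=\lfloor 1/r_{i-1}\rfloor$ and $r_i=1/r_{i-1}-b_i$ (so $\frac{1}{r_{i-1}}=b_i+r_i$ with $0\le r_i<1$). For each index $i\le L$ for which $r_i$ is defined, set $d_i=r_i-\frac{n_{i+2}}{n_{i+1}}$. (The conclusion includes that the relevant $b_{k+1}$,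 resp. $b_L$, is defined.) *)

theory Defs
  imports Complex_Main
begin

text \<open>Euclidean algorithm on n1, n2: eu_pair n1 n2 i = (n_(i+1), n_(i+2)).\<close>
fun eu_pair :: "nat \<Rightarrow> nat \<Rightarrow> nat \<Rightarrow> nat \<times> nat" where
  "eu_pair n1 n2 0 = (n1, n2)"
| "eu_pair n1 n2 (Suc i) = (case eu_pair n1 n2 i of (x, y) \<Rightarrow> (y, x mod y))"

text \<open>n_i for i >= 1 (n_0 is not used by the paper; set to 0).\<close>
definition eun :: "nat \<Rightarrow> nat \<Rightarrow> nat \<Rightarrow> nat" where
  "eun n1 n2 i = (if i = 0 then 0 else fst (eu_pair n1 n2 (i - 1)))"

definition cf_a :: "nat \<Rightarrow> nat \<Rightarrow> nat \<Rightarrow> nat" where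
  "cf_a n1 n2 i = (if i = 0 then 0 else eun n1 n2 i div eun n1 n2 (i + 1))"

definition cf_L :: "nat \<Rightarrow> nat \<Rightarrow> nat" where
  "cf_L n1 n2 = (LEAST l. 1 \<le> l \<and> eun n1 n2 (l + 2) = 0)"

fun cf_r :: "real \<Rightarrow> nat \<Rightarrow> real" where
  "cf_r r0 0 = r0"
| "cf_r r0 (Suc i) = 1 / cf_r r0 i - of_int \<lfloor>1 / cf_r r0 i\<rfloor>"

text \<open>b_i (and r_i) is defined iff r_0, ..., r_(i-1) are all nonzero.\<close>
definition cf_defined :: "real \<Rightarrow> nat \<Rightarrow> bool" where
  "cf_defined r0 i = (\<forall>j<i. cf_r r0 j \<noteq> 0)"

definition cf_b :: "real \<Rightarrow> nat \<Rightarrow> int" where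
  "cf_b r0 i = (if i = 0 then \<lfloor>r0\<rfloor> else \<lfloor>1 / cf_r r0 (i - 1)\<rfloor>)"

definition cf_d :: "nat \<Rightarrow> nat \<Rightarrow> real \<Rightarrow> nat \<Rightarrow> real" where
  "cf_d n1 n2 r0 i = cf_r r0 i - real (eun n1 n2 (i + 2)) / real (eun n1 n2 (i + 1))"

end

theory Submission imports Defs begin

lemma eun1: "eun n1 n2 1 = n1" and eun2: "eun n1 n2 2 = n2"
  by (simp_all add: eun_def numeral_2_eq_2)

lemma eun_rec: "1 \<le> i \<Longrightarrow> eun n1 n2 (i+2) = eun n1 n2 i mod eun n1 n2 (i+1)"
proof (cases i)
  case (Suc j)
  show ?thesis using Suc by (simp add: eun_def split: prod.splits)
qed simp

lemma eun_gcd: "1 \<le> i \<Longrightarrow> gcd (eun n1 n2 i) (eun n1 n2 (i+1)) = gcd n1 n2"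
proof (induction i rule: nat_induct_at_least)
  case base then show ?case by (simp add: eun_def)
next
  case (Suc n)
  have "gcd (eun n1 n2 (Suc n)) (eun n1 n2 (Suc n + 1)) = gcd (eun n1 n2 (n+1)) (eun n1 n2 n mod eun n1 n2 (n+1))"
    using eun_rec[OF Suc(1), of n1 n2] by simp
  also have "\<dots> = gcd (eun n1 n2 n) (eun n1 n2 (n+1))" by (metis gcd.commute gcd_red_nat)
  finally show ?case using Suc by simp
qed

lemma eun_exists:
  assumes "0 < n2"
  shows "\<exists>l. 1 \<le> l \<and> eun n1 n2 (l + 2) = 0"
proof -
  have "(\<exists>j. 1 \<le> j \<and> j \<le> i \<and> eun n1 n2 (j+2) = 0) \<or> (0 < eun n1 n2 (i+2) \<and> eun n1 n2 (i+2) + i \<le> n2)" if "1 \<le> i" for i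
    using that
  proof (induction i rule: nat_induct_at_least)
    case base
    show ?case
    proof (cases "eun n1 n2 3 = 0")
      case True then show ?thesis by (intro disjI1 exI[of _ 1]) (simp add: numeral_3_eq_3)
    next
      case False
      have "eun n1 n2 3 = n1 mod n2" by (simp add: eun_def numeral_3_eq_3)
      then have "eun n1 n2 3 < n2" using assms by simp
      then show ?thesis using False by (simp add: numeral_3_eq_3)
    qed
  next
    case (Suc n)
    show ?case
    proof (cases "\<exists>j. 1 \<le> j \<and> j \<le> n \<and> eun n1 n2 (j+2) = 0")
      case True then show ?thesis using le_SucI by blast
    next
      case False
      with Suc have h: "0 < eun n1 n2 (n+2)" "eun n1 n2 (n+2) + n \<le> n2" by auto
      have e: "eun n1 n2 (Suc n + 2) = eun n1 n2 (n+1) mod eun n1 n2 (n+2)"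
        using eun_rec[of "n+1" n1 n2] by simp
      then have "eun n1 n2 (Suc n + 2) < eun n1 n2 (n+2)" using h by simp
      then show ?thesis using h Suc(1) by (cases "eun n1 n2 (Suc n + 2) = 0") auto
    qed
  qed
  from this[of n2] assms show ?thesis by auto
qed

lemma coreA:
  fixes p q a s :: nat and r :: real
  assumes "q = a*p + s" "0 < s" "s < p" "p < q"
    and "\<bar>r - p/q\<bar> < 1 / (real q * (real q - 1))"
  shows "r > 0 \<and> \<lfloor>1/r\<rfloor> = int a"
proof -
  have a1: "1 \<le> a" using assms(1-4) by (cases a) auto
  have ap: "a * 2 \<le> a * p" using assms(2,3) by simp
  have aq: "a + 2 \<le> q" using assms(1-4) a1 ap by linarith
  have qpos: "real q > 1" using aq a1 by linarith
  have l1: "1 / (real q * (real q - 1)) \<le> 1 / (real q * (real a + 1))"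
    using aq qpos by (intro divide_left_mono mult_left_mono) auto
  have l2: "1 / (real q * (real q - 1)) \<le> 1 / (real q * real a)"
    using aq qpos a1 by (intro divide_left_mono mult_left_mono mult_pos_pos) auto
  have qr: "real q = real a * real p + real s" using assms(1) by simp
  have e1: "p/q - 1/(real a+1) \<ge> 1 / (real q * (real a + 1))"
  proof -
    have "p/q - 1/(real a+1) = (real p * (real a + 1) - real q) / (real q * (real a+1))"
      using qpos by (simp add: field_simps)
    also have "\<dots> = (real p - real s) / (real q * (real a+1))" using qr by (simp add: algebra_simps)
    also have "\<dots> \<ge> 1 / (real q * (real a+1))" using assms(3) qpos
      by (intro divide_right_mono) auto
    finally show ?thesis .
  qed
  have e2: "1/real a - p/q \<ge> 1 / (real q * real a)"
  proof -
    have "1/real a - p/q = (real q - real a * real p) / (real q * real a)"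
      using qpos a1 by (simp add: field_simps)
    also have "\<dots> = real s / (real q * real a)" using qr by simp
    also have "\<dots> \<ge> 1 / (real q * real a)" using assms(2) qpos a1
      by (intro divide_right_mono) auto
    finally show ?thesis .
  qed
  have rlo: "r > 1/(real a + 1)" using assms(5) l1 e1 by (simp add: abs_less_iff)
  have rhi: "r < 1/real a" using assms(5) l2 e2 by (simp add: abs_less_iff)
  have rpos: "r > 0" using rlo a1 by (smt (verit) divide_pos_pos of_nat_0_le_iff)
  have "1/r < real a + 1" using rlo rpos a1 by (simp add: field_simps)
  moreover have "real a < 1/r" using rhi rpos a1 by (simp add: field_simps)
  ultimately show ?thesis using rpos by (simp add: floor_eq_iff)
qed

lemma coreB:
  fixes q :: nat and r :: real
  assumes "2 \<le> q" "\<bar>r - 1/q\<bar> < 1 / (real q * (real q + 1))"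
  shows "r > 0 \<and> (\<lfloor>1/r\<rfloor> = int q \<or> \<lfloor>1/r\<rfloor> = int q - 1)"
proof -
  have q2: "real q \<ge> 2" using assms(1) by simp
  have qq: "real q * (real q + 1) \<noteq> 0" "real q + real q * real q \<noteq> 0" using q2 by (auto simp: add_nonneg_eq_0_iff)
  have e1: "1/real q - 1 / (real q * (real q + 1)) = 1/(real q + 1)"
    using q2 qq by (simp add: divide_simps)
  have e2a: "1/real q + 1 / (real q * (real q + 1)) = (real q + 2) / (real q * (real q + 1))"
    using q2 qq by (simp add: divide_simps)
  have e2b: "(real q + 2) * (real q - 1) \<le> real q * (real q + 1)" by (simp add: algebra_simps)
  have e2: "1/real q + 1 / (real q * (real q + 1)) \<le> 1/(real q - 1)" unfolding e2a
    using e2b q2 by (simp add: divide_simps)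
  have rlo: "r > 1/(real q+1)" using assms(2) e1 by (simp add: abs_less_iff)
  have rhi: "r < 1/(real q - 1)" using assms(2) e2 by (simp add: abs_less_iff)
  have rpos: "r > 0" using rlo q2 by (smt (verit) divide_pos_pos)
  have "1/r < real q + 1" using rlo rpos q2 by (simp add: field_simps)
  moreover have "real q - 1 < 1/r" using rhi rpos q2 by (simp add: field_simps)
  ultimately have "int q - 1 \<le> \<lfloor>1/r\<rfloor>" "\<lfloor>1/r\<rfloor> < int q + 1"
    by (simp add: le_floor_iff, metis floor_less_iff of_int_1 of_int_add of_int_of_nat_eq)
  then show ?thesis using rpos by auto
qed

theorem lemma2:
  fixes n1 n2 k :: nat and r0 :: real
  assumes "coprime n1 n2" and "0 < n2" and "n2 < n1" and "1 < n1"
    and "0 \<le> r0" and "r0 < 1"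
    and "0 < k" and "k < cf_L n1 n2"
    and "\<forall>i\<le>k. cf_defined r0 i \<and> int (cf_a n1 n2 i) = cf_b r0 i"
  shows "(k < cf_L n1 n2 - 1 \<and>
          \<bar>cf_d n1 n2 r0 k\<bar> < 1 / (real (eun n1 n2 (k + 1)) * (real (eun n1 n2 (k + 1)) - 1))
          \<longrightarrow> cf_defined r0 (k + 1) \<and> int (cf_a n1 n2 (k + 1)) = cf_b r0 (k + 1))
       \<and> (k = cf_L n1 n2 - 1 \<and>
          \<bar>cf_d n1 n2 r0 (cf_L n1 n2 - 1)\<bar>
            < 1 / (real (eun n1 n2 (cf_L n1 n2)) * (real (eun n1 n2 (cf_L n1 n2)) + 1))
          \<longrightarrow> cf_defined r0 (cf_L n1 n2) \<and>
              (int (cf_a n1 n2 (cf_L n1 n2)) = cf_b r0 (cf_L n1 n2) \<or>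
               int (cf_a n1 n2 (cf_L n1 n2)) - 1 = cf_b r0 (cf_L n1 n2)))"
proof -
  let ?N = "eun n1 n2" and ?L = "cf_L n1 n2"
  have ex: "\<exists>l. 1 \<le> l \<and> ?N (l + 2) = 0" using eun_exists assms(2) by blast
  have L1: "1 \<le> ?L" and NL2: "?N (?L + 2) = 0"
    using LeastI_ex[OF ex] unfolding cf_L_def by auto
  have nz: "?N (j+2) \<noteq> 0" if "1 \<le> j" "j < ?L" for j
    using not_less_Least[of j "\<lambda>l. 1 \<le> l \<and> ?N (l + 2) = 0"] that unfolding cf_L_def by auto
  have Npos: "?N i > 0" if i1: "1 \<le> i" and iL: "i \<le> ?L + 1" for i
  proof -
    have "i = 1 \<or> i = 2 \<or> 3 \<le> i" using i1 by arith
    then show ?thesis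
    proof (elim disjE)
      assume "i = 1" then show ?thesis using eun1 assms by simp
    next
      assume "i = 2" then show ?thesis using eun2 assms by simp
    next
      assume i3: "3 \<le> i"
      then have e: "i - 2 + 2 = i" by simp
      have "?N (i - 2 + 2) \<noteq> 0" using nz[of "i-2"] i3 iL by simp
      then show ?thesis using e by simp
    qed
  qed
  have Nlt: "?N (i+2) < ?N (i+1)" if "1 \<le> i" "i \<le> ?L" for i
    using eun_rec[OF that(1), of n1 n2] Npos[of "i+1"] that by simp
  have rdef: "cf_r r0 k \<noteq> 0 \<Longrightarrow> cf_defined r0 (k+1)"
    using assms(9) unfolding cf_defined_def by (auto simp: less_Suc_eq)
  have bk: "cf_b r0 (k+1) = \<lfloor>1 / cf_r r0 k\<rfloor>" by (simp add: cf_b_def)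
  show ?thesis
  proof (rule conjI; rule impI)
    assume h: "k < ?L - 1 \<and> \<bar>cf_d n1 n2 r0 k\<bar> < 1 / (real (?N (k + 1)) * (real (?N (k + 1)) - 1))"
    define q where "q = ?N (k+1)"
    define p where "p = ?N (k+2)"
    define s where "s = ?N (k+1+2)"
    have s_eq: "s = q mod p" unfolding s_def q_def p_def using eun_rec[of "k+1" n1 n2] by simp
    have s0: "s \<noteq> 0" unfolding s_def using nz[of "k+1"] h by (simp add: less_diff_conv)
    have p0: "0 < p" unfolding p_def using Npos[of "k+2"] assms(8) by simp
    have spl: "s < p" using s_eq p0 by simp
    have pq: "p < q" unfolding p_def q_def using Nlt[of k] assms(7,8) by simp
    have qe: "q = (q div p) * p + s" using s_eq by simp
    have ca: "cf_a n1 n2 (k+1) = q div p" unfolding cf_a_def q_def p_def by simp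
    have dd: "cf_d n1 n2 r0 k = cf_r r0 k - real p / real q" unfolding cf_d_def p_def q_def by simp
    have "cf_r r0 k > 0 \<and> \<lfloor>1 / cf_r r0 k\<rfloor> = int (q div p)"
      using coreA[OF qe _ spl pq] s0 h dd q_def by simp
    then show "cf_defined r0 (k + 1) \<and> int (cf_a n1 n2 (k + 1)) = cf_b r0 (k + 1)"
      using rdef bk ca by simp
  next
    assume h: "k = ?L - 1 \<and> \<bar>cf_d n1 n2 r0 (?L - 1)\<bar> < 1 / (real (?N ?L) * (real (?N ?L) + 1))"
    have kL: "k + 1 = ?L" using h assms(7) by simp
    define q where "q = ?N ?L"
    define p where "p = ?N (?L+1)"
    have p0: "0 < p" unfolding p_def using Npos[of "?L+1"] L1 by simp
    have g: "gcd q p = 1" unfolding q_def p_def using eun_gcd[OF L1, of n1 n2] assms(1) by simp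
    have "q mod p = 0" unfolding q_def p_def using eun_rec[OF L1, of n1 n2] NL2 by simp
    then have "p dvd q" by auto
    then have p1: "p = 1" using g by (metis gcd_nat.absorb_iff2 gcd.commute)
    have pq: "p < q" unfolding p_def q_def using Nlt[of k] assms(7) kL by simp
    have q2: "2 \<le> q" using pq p1 by simp
    have ca: "cf_a n1 n2 ?L = q" unfolding cf_a_def q_def using p1 p_def L1 by simp
    have dd: "cf_d n1 n2 r0 k = cf_r r0 k - 1 / real q" unfolding cf_d_def
      using p1 p_def q_def kL by (simp add: numeral_2_eq_2)
    have "cf_r r0 k > 0 \<and> (\<lfloor>1 / cf_r r0 k\<rfloor> = int q \<or> \<lfloor>1 / cf_r r0 k\<rfloor> = int q - 1)"
      using coreB[OF q2] h dd q_def by simp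
    then show "cf_defined r0 ?L \<and> (int (cf_a n1 n2 ?L) = cf_b r0 ?L \<or> int (cf_a n1 n2 ?L) - 1 = cf_b r0 ?L)"
      using rdef bk ca kL by auto
  qed
qed

end
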